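(* Let $\mu_c,\mu_s\in\mathbb{R}$, $c\ge0$, $\sigma_c,\sigma_s>0$, $\eta_c,\eta_s>0$. Let $U^*$ be the optimal value of $$\max_{r\in\mathbb{R}}\; p_0+r\mu_c-c-\eta_c r^2\sigma_c^2\quad\text{subject to}\quad p_0=\mu_s(1-r)-\eta_s\sigma_s^2(1-r)^2,$$ and let $U_0=\mu_s-\eta_s\sigma_s^2-c$ be the creator utility without royalties ($r=0$). Then the utility gain from royalties is $$f:=U^*-U_0=\frac{\big(2\eta_s\sigma_s^2-\mu_s+\mu_c\big)^2}{4\big(\eta_s\sigma_s^2+\eta_c\sigma_c^2\big)}\ge 0.$$ Moreover, viewing $f$ as a function of $(\mu_s,\mu_c,\eta_s,\eta_c,\sigma_s,\sigma_c)$: $f$ is increasing in $\sigma_s$ (i.e. $\partial f/\partial\sigma_s\ge0$) if and only if $-2\eta_s\sigma_s^2-4\eta_c\sigma_c^2\le\mu_s-\mu_c\le 2\eta_s\sigma_s^2$; and $f$ (weakly) decreases as $\sigma_c$ increases.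
   Context: Interpretation: a creator sells an NFT at mint price $p_0$ with royalty rate $r$ to a speculator who resells at the realized end-buyer valuation $V$. The creator believes $\mathbb{E}[V]=\mu_c$, $\mathrm{Var}(V)=\sigma_c^2$; the speculator believes $\mathbb{E}[V]=\mu_s$, $\mathrm{Var}(V)=\sigma_s^2$. Each has mean-variance utility with risk-aversion coefficient $\eta_c$ resp. $\eta_s$ (creator profit $p_0+rV-c$, speculator profit $(1-r)V-p_0$); the constraint is the speculator's binding participation constraint under his own beliefs. *)

theory Defs
  imports "HOL-Analysis.Analysis"
begin

text \<open>Speculator's binding participation constraint: mint price as function of r.\<close>
definition mint_price :: "real \<Rightarrow> real \<Rightarrow> real \<Rightarrow> real \<Rightarrow> real" where
  "mint_price mu_s eta_s sigma_s r = mu_s * (1 - r) - eta_s * sigma_s^2 * (1 - r)^2"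

definition creator_util ::
  "real \<Rightarrow> real \<Rightarrow> real \<Rightarrow> real \<Rightarrow> real \<Rightarrow> real \<Rightarrow> real \<Rightarrow> real \<Rightarrow> real" where
  "creator_util mu_s mu_c eta_s eta_c sigma_s sigma_c c r =
     mint_price mu_s eta_s sigma_s r + r * mu_c - c - eta_c * r^2 * sigma_c^2"

definition U_star ::
  "real \<Rightarrow> real \<Rightarrow> real \<Rightarrow> real \<Rightarrow> real \<Rightarrow> real \<Rightarrow> real \<Rightarrow> real" where
  "U_star mu_s mu_c eta_s eta_c sigma_s sigma_c c =
     Sup (range (creator_util mu_s mu_c eta_s eta_c sigma_s sigma_c c))"

definition U_0 :: "real \<Rightarrow> real \<Rightarrow> real \<Rightarrow> real \<Rightarrow> real" where
  "U_0 mu_s eta_s sigma_s c = mu_s - eta_s * sigma_s^2 - c"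

definition gain ::
  "real \<Rightarrow> real \<Rightarrow> real \<Rightarrow> real \<Rightarrow> real \<Rightarrow> real \<Rightarrow> real \<Rightarrow> real" where
  "gain mu_s mu_c eta_s eta_c sigma_s sigma_c c =
     U_star mu_s mu_c eta_s eta_c sigma_s sigma_c c - U_0 mu_s eta_s sigma_s c"

end

theory Submission
  imports Defs
begin

lemma util_eq:
  fixes mu_s mu_c eta_s eta_c s t c r :: real
  assumes K: "eta_s * s^2 + eta_c * t^2 > 0"
  defines "K \<equiv> eta_s * s^2 + eta_c * t^2"
  defines "D \<equiv> 2 * eta_s * s^2 - mu_s + mu_c"
  shows "creator_util mu_s mu_c eta_s eta_c s t c r
     = U_0 mu_s eta_s s c + D^2 / (4*K) - K * (r - D/(2*K))^2"
proof -
  have a: "creator_util mu_s mu_c eta_s eta_c s t c r = U_0 mu_s eta_s s c + D * r - K * r^2"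
    unfolding creator_util_def mint_price_def U_0_def K_def D_def
    by (simp add: algebra_simps power2_eq_square)
  have Kn: "K \<noteq> 0" using K K_def by simp
  have b: "D * r - K * r^2 = D^2 / (4*K) - K * (r - D/(2*K))^2"
    using Kn by (simp add: field_simps power2_eq_square)
  show ?thesis using a b by simp
qed

lemma ustar_eq:
  fixes mu_s mu_c eta_s eta_c s t c :: real
  assumes K: "eta_s * s^2 + eta_c * t^2 > 0"
  shows "creator_util mu_s mu_c eta_s eta_c s t c
           ((2 * eta_s * s^2 - mu_s + mu_c) / (2*(eta_s * s^2 + eta_c * t^2)))
         = U_star mu_s mu_c eta_s eta_c s t c"
    and "gain mu_s mu_c eta_s eta_c s t c
        = (2 * eta_s * s^2 - mu_s + mu_c)^2 / (4 * (eta_s * s^2 + eta_c * t^2))"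
proof -
  define K where "K = eta_s * s^2 + eta_c * t^2"
  define D where "D = 2 * eta_s * s^2 - mu_s + mu_c"
  have Kp: "K > 0" using K K_def by simp
  have u: "\<And>r. creator_util mu_s mu_c eta_s eta_c s t c r
     = U_0 mu_s eta_s s c + D^2 / (4*K) - K * (r - D/(2*K))^2"
    using util_eq[OF K] unfolding K_def D_def by blast
  have m: "creator_util mu_s mu_c eta_s eta_c s t c (D/(2*K)) = U_0 mu_s eta_s s c + D^2 / (4*K)"
    using u by simp
  have le: "\<And>r. creator_util mu_s mu_c eta_s eta_c s t c r \<le> U_0 mu_s eta_s s c + D^2 / (4*K)"
    using u Kp by (simp add: mult_nonneg_nonneg)
  have S: "U_star mu_s mu_c eta_s eta_c s t c = U_0 mu_s eta_s s c + D^2 / (4*K)"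
    unfolding U_star_def
  proof (rule cSup_eq_maximum)
    show "U_0 mu_s eta_s s c + D^2 / (4*K) \<in> range (creator_util mu_s mu_c eta_s eta_c s t c)"
      using m[symmetric] by (rule range_eqI)
  qed (use le in auto)
  show "creator_util mu_s mu_c eta_s eta_c s t c
           ((2 * eta_s * s^2 - mu_s + mu_c) / (2*(eta_s * s^2 + eta_c * t^2)))
         = U_star mu_s mu_c eta_s eta_c s t c"
    using m S unfolding K_def D_def by simp
  show "gain mu_s mu_c eta_s eta_c s t c
        = (2 * eta_s * s^2 - mu_s + mu_c)^2 / (4 * (eta_s * s^2 + eta_c * t^2))"
    unfolding gain_def S K_def D_def by simp
qed

theorem theorem8:
  fixes mu_s mu_c c sigma_c sigma_s eta_c eta_s :: real
  assumes "c \<ge> 0" and "sigma_c > 0" and "sigma_s > 0" and "eta_c > 0" and "eta_s > 0"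
  shows "(\<exists>r. creator_util mu_s mu_c eta_s eta_c sigma_s sigma_c c r
                 = U_star mu_s mu_c eta_s eta_c sigma_s sigma_c c)
    \<and> gain mu_s mu_c eta_s eta_c sigma_s sigma_c c
        = (2 * eta_s * sigma_s^2 - mu_s + mu_c)^2 / (4 * (eta_s * sigma_s^2 + eta_c * sigma_c^2))
    \<and> gain mu_s mu_c eta_s eta_c sigma_s sigma_c c \<ge> 0
    \<and> (\<lambda>x. gain mu_s mu_c eta_s eta_c x sigma_c c) differentiable (at sigma_s)
    \<and> (deriv (\<lambda>x. gain mu_s mu_c eta_s eta_c x sigma_c c) sigma_s \<ge> 0 \<longleftrightarrow>
        (- 2 * eta_s * sigma_s^2 - 4 * eta_c * sigma_c^2 \<le> mu_s - mu_c
         \<and> mu_s - mu_c \<le> 2 * eta_s * sigma_s^2))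
    \<and> (\<forall>s1 s2. 0 < s1 \<longrightarrow> s1 \<le> s2 \<longrightarrow>
        gain mu_s mu_c eta_s eta_c sigma_s s2 c \<le> gain mu_s mu_c eta_s eta_c sigma_s s1 c)"
proof -
  define B where "B = eta_c * sigma_c^2"
  have Bp: "B > 0" using assms B_def by simp
  have Kx: "\<And>x. eta_s * x^2 + eta_c * sigma_c^2 > 0"
    using assms by (simp add: add_nonneg_pos)
  define F where "F = (\<lambda>x::real. (2 * eta_s * x^2 - mu_s + mu_c)^2 / (4 * (eta_s * x^2 + eta_c * sigma_c^2)))"
  have gF: "(\<lambda>x. gain mu_s mu_c eta_s eta_c x sigma_c c) = F"
    unfolding F_def using ustar_eq(2)[OF Kx] by auto
  define D where "D = 2 * eta_s * sigma_s^2 - mu_s + mu_c"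
  define S where "S = eta_s * sigma_s^2 + eta_c * sigma_c^2"
  have Sp: "S > 0" using Kx S_def by simp
  have dF: "(F has_real_derivative (2 * eta_s * sigma_s * D * (4*S - D) / (4 * S^2))) (at sigma_s)"
  proof -
    have "(F has_real_derivative
      ((2 * D * (2 * eta_s * (2 * sigma_s)) * (4 * S) - D^2 * (4 * (eta_s * (2 * sigma_s)))) / (4*S)^2)) (at sigma_s)"
      unfolding F_def D_def S_def
      apply (rule derivative_eq_intros refl | simp)+
      using Kx[of sigma_s] by (auto simp: power2_eq_square)
    moreover have "(2 * D * (2 * eta_s * (2 * sigma_s)) * (4 * S) - D^2 * (4 * (eta_s * (2 * sigma_s)))) / (4*S)^2
       = 2 * eta_s * sigma_s * D * (4*S - D) / (4 * S^2)"
      using Sp by (simp add: field_simps power2_eq_square)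
    ultimately show ?thesis by simp
  qed
  have p1: "\<exists>r. creator_util mu_s mu_c eta_s eta_c sigma_s sigma_c c r
                 = U_star mu_s mu_c eta_s eta_c sigma_s sigma_c c"
    using ustar_eq(1)[OF Kx] by blast
  have p2: "gain mu_s mu_c eta_s eta_c sigma_s sigma_c c
        = (2 * eta_s * sigma_s^2 - mu_s + mu_c)^2 / (4 * (eta_s * sigma_s^2 + eta_c * sigma_c^2))"
    using ustar_eq(2)[OF Kx] .
  have p3: "gain mu_s mu_c eta_s eta_c sigma_s sigma_c c \<ge> 0"
    unfolding p2 using Kx[of sigma_s] by simp
  have p4: "(\<lambda>x. gain mu_s mu_c eta_s eta_c x sigma_c c) differentiable (at sigma_s)"
    unfolding gF using dF real_differentiable_def by blast
  have dv: "deriv (\<lambda>x. gain mu_s mu_c eta_s eta_c x sigma_c c) sigma_s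
     = 2 * eta_s * sigma_s * D * (4*S - D) / (4 * S^2)"
    unfolding gF using DERIV_imp_deriv[OF dF] .
  have c1: "(- 2 * eta_s * sigma_s^2 - 4 * eta_c * sigma_c^2 \<le> mu_s - mu_c) \<longleftrightarrow> 4*S - D \<ge> 0"
    unfolding S_def D_def by auto
  have c2: "mu_s - mu_c \<le> 2 * eta_s * sigma_s^2 \<longleftrightarrow> D \<ge> 0"
    unfolding D_def by auto
  have pos: "2 * eta_s * sigma_s > 0" "4 * S^2 > 0" using assms Sp by auto
  have "2 * eta_s * sigma_s * D * (4*S - D) / (4 * S^2) \<ge> 0 \<longleftrightarrow> D * (4*S - D) \<ge> 0"
  proof -
    have "2 * eta_s * sigma_s * D * (4*S - D) / (4 * S^2) \<ge> 0 \<longleftrightarrow> (2 * eta_s * sigma_s) * (D * (4*S - D)) \<ge> 0"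
      using pos(2) by (simp add: zero_le_divide_iff mult.assoc)
    also have "\<dots> \<longleftrightarrow> D * (4*S - D) \<ge> 0"
      using pos(1) by (metis zero_le_mult_iff not_le order_less_le)
    finally show ?thesis .
  qed
  also have "\<dots> \<longleftrightarrow> (4*S - D \<ge> 0 \<and> D \<ge> 0)"
    using Sp by (auto simp: zero_le_mult_iff)
  finally have p5: "deriv (\<lambda>x. gain mu_s mu_c eta_s eta_c x sigma_c c) sigma_s \<ge> 0 \<longleftrightarrow>
        (- 2 * eta_s * sigma_s^2 - 4 * eta_c * sigma_c^2 \<le> mu_s - mu_c
         \<and> mu_s - mu_c \<le> 2 * eta_s * sigma_s^2)"
    unfolding dv c1 c2 by blast
  have p6: "\<forall>s1 s2. 0 < s1 \<longrightarrow> s1 \<le> s2 \<longrightarrow>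
        gain mu_s mu_c eta_s eta_c sigma_s s2 c \<le> gain mu_s mu_c eta_s eta_c sigma_s s1 c"
  proof (intro allI impI)
    fix s1 s2 :: real assume h: "0 < s1" "s1 \<le> s2"
    have K1: "eta_s * sigma_s^2 + eta_c * s1^2 > 0" using assms h by (simp add: add_pos_pos)
    have K2: "eta_s * sigma_s^2 + eta_c * s2^2 > 0" using assms h by (simp add: add_pos_pos)
    have "s1^2 \<le> s2^2" using h by (simp add: power_mono)
    then have le: "eta_s * sigma_s^2 + eta_c * s1^2 \<le> eta_s * sigma_s^2 + eta_c * s2^2"
      using assms by simp
    show "gain mu_s mu_c eta_s eta_c sigma_s s2 c \<le> gain mu_s mu_c eta_s eta_c sigma_s s1 c"
      unfolding ustar_eq(2)[OF K1] ustar_eq(2)[OF K2]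
      by (rule divide_left_mono) (use le K1 K2 in auto)
  qed
  show ?thesis using p1 p2 p3 p4 p5 p6 by blast
qed

end
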